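(* Let $n > 0$ be real and $m \ge 1$ an integer. For $a \in (0,n]$ let $\Delta_a^m$ be the set of real polynomials $h(t) = u_m t^m + \dots + u_1 t + u_0$ of degree exactly $m$ with all coefficients $u_i \ge 0$ such that, as a function on $[-n,n]$, $h$ attains its minimum at the point $-a$, and $h'(-a) = 0$. Then: (1) If $m$ is even, then $$ \min_{a\in(0,n]}\ \min_{h\in\Delta_a^m} \frac{h(n)}{2h(n)-2h(-a)} = \min_{h\in\Delta_n^m}\frac{h(n)}{2h(n)-2h(-n)} = \frac{h^*(n)}{2h^*(n)-2h^*(-n)} = \frac{m+1}{4m}, $$ where $h^*(t) = t^m + m n^{m-1} t$ (which belongs to $\Delta_n^m$). (2) If $m \ge 2$ is odd, then $$ \inf_{h\in\Delta_n^m}\frac{h(n)}{2h(n)-2h(-n)} \ge \min_{h\in\Delta_n^{m-1}}\frac{h(n)}{2h(n)-2h(-n)}. $$ *)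

theory Defs
  imports Complex_Main "HOL-Computational_Algebra.Polynomial"
begin

definition Delta :: "real \<Rightarrow> real \<Rightarrow> nat \<Rightarrow> real poly set" where
  "Delta n a m = {h. degree h = m \<and> (\<forall>i. coeff h i \<ge> 0)
      \<and> (\<forall>t\<in>{-n..n}. poly h (-a) \<le> poly h t)
      \<and> poly (pderiv h) (-a) = 0}"

definition ratio :: "real \<Rightarrow> real \<Rightarrow> real poly \<Rightarrow> real" where
  "ratio n a h = poly h n / (2 * poly h n - 2 * poly h (-a))"

end

theory Submission
  imports Defs
begin

lemma poly_sum_m:
  fixes p :: "real poly"
  assumes "degree p \<le> m"
  shows "poly p x = (\<Sum>i\<le>m. coeff p i * x ^ i)"
proof -
  have "poly p x = (\<Sum>i\<le>degree p. coeff p i * x ^ i)" by (rule poly_altdef)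
  also have "\<dots> = (\<Sum>i\<le>m. coeff p i * x ^ i)"
    by (rule sum.mono_neutral_left) (use assms le_degree in auto)
  finally show ?thesis .
qed

lemma pderiv_sum_m:
  fixes p :: "real poly"
  assumes "degree p \<le> m"
  shows "x * poly (pderiv p) x = (\<Sum>i\<le>m. real i * coeff p i * x ^ i)"
proof -
  have dp: "degree (pderiv p) \<le> m" using assms by (simp add: degree_pderiv)
  define g where "g j = real j * coeff p j * x ^ j" for j
  have "x * poly (pderiv p) x = x * (\<Sum>i\<le>m. coeff (pderiv p) i * x ^ i)"
    using poly_sum_m[OF dp] by simp
  also have "\<dots> = (\<Sum>i\<le>m. g (Suc i))"
    by (simp add: sum_distrib_left coeff_pderiv g_def algebra_simps)
  also have "\<dots> = (\<Sum>i\<le>Suc m. g i)"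
    by (subst sum.atMost_Suc_shift) (simp add: g_def)
  also have "\<dots> = (\<Sum>i\<le>m. g i)"
    using assms by (simp add: g_def coeff_eq_0)
  finally show ?thesis by (simp add: g_def)
qed

lemma key1:
  fixes h :: "real poly"
  assumes deg: "degree h \<le> m" and m: "m \<ge> 1" and c: "\<forall>i. coeff h i \<ge> 0"
    and a: "0 < a" "a \<le> n" and d: "poly (pderiv h) (-a) = 0"
  shows "(real m - 1) * poly h n + (real m + 1) * poly h (-a) \<ge> 0"
proof -
  have e: "(real m - 1) * poly h n + (real m + 1) * poly h (-a)
     = (real m - 1) * poly h n + (real m + 1) * poly h (-a) - 2 * ((-a) * poly (pderiv h) (-a))"
    using d by simp
  also have "\<dots> = (\<Sum>i\<le>m. coeff h i * ((real m - 1) * n ^ i + (real m + 1 - 2 * real i) * (-a) ^ i))"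
    unfolding poly_sum_m[OF deg, of n] poly_sum_m[OF deg, of "-a"] pderiv_sum_m[OF deg]
    by (simp add: sum_distrib_left sum_subtractf sum.distrib[symmetric] algebra_simps)
  also have "\<dots> \<ge> 0"
  proof (rule sum_nonneg)
    fix i assume i: "i \<in> {..m}"
    have "(real m - 1) * n ^ i + (real m + 1 - 2 * real i) * (-a) ^ i \<ge> 0"
    proof (cases "i = 0")
      case True then show ?thesis using m by simp
    next
      case False
      have b1: "\<bar>real m + 1 - 2 * real i\<bar> \<le> real m - 1" using False i by auto
      have b2: "\<bar>(-a) ^ i\<bar> \<le> n ^ i" using a by (simp add: power_abs power_mono)
      have "\<bar>(real m + 1 - 2 * real i) * (-a) ^ i\<bar> \<le> (real m - 1) * n ^ i"
        unfolding abs_mult by (rule mult_mono[OF b1 b2]) (use m in auto)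
      then show ?thesis by linarith
    qed
    then show "0 \<le> coeff h i * ((real m - 1) * n ^ i + (real m + 1 - 2 * real i) * (-a) ^ i)"
      using c by simp
  qed
  finally show ?thesis .
qed

lemma key2:
  fixes h :: "real poly"
  assumes deg: "degree h \<le> m" and m: "odd m" "m \<ge> 2" and c: "\<forall>i. coeff h i \<ge> 0"
    and a: "0 < n" and d: "poly (pderiv h) (-n) = 0"
  shows "(real m - 2) * poly h n + real m * poly h (-n) \<ge> 0"
proof -
  have e: "(real m - 2) * poly h n + real m * poly h (-n)
     = (real m - 2) * poly h n + real m * poly h (-n) - 2 * ((-n) * poly (pderiv h) (-n))"
    using d by simp
  also have "\<dots> = (\<Sum>i\<le>m. coeff h i * ((real m - 2) * n ^ i + (real m - 2 * real i) * (-n) ^ i))"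
    unfolding poly_sum_m[OF deg, of n] poly_sum_m[OF deg, of "-n"] pderiv_sum_m[OF deg]
    by (simp add: sum_distrib_left sum_subtractf sum.distrib[symmetric] algebra_simps)
  also have "\<dots> \<ge> 0"
  proof (rule sum_nonneg)
    fix i assume i: "i \<in> {..m}"
    have "(real m - 2) * n ^ i + (real m - 2 * real i) * (-n) ^ i \<ge> 0"
    proof (cases "even i")
      case True
      then have "i \<noteq> m" using m by auto
      then have "i + 1 \<le> m" using i by auto
      then have "real i + 1 \<le> real m" by linarith
      then have "(real m - 2) * n ^ i + (real m - 2 * real i) * (-n) ^ i = (2 * real m - 2 - 2 * real i) * n ^ i"
        using True by (simp add: algebra_simps)
      also have "\<dots> \<ge> 0" using \<open>real i + 1 \<le> real m\<close> a by simp
      finally show ?thesis by simp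
    next
      case False
      then have "i \<ge> 1" by (cases i) auto
      have "(real m - 2) * n ^ i + (real m - 2 * real i) * (-n) ^ i = (2 * real i - 2) * n ^ i"
        using False by (simp add: algebra_simps)
      also have "\<dots> \<ge> 0" using \<open>i \<ge> 1\<close> a by simp
      finally show ?thesis by simp
    qed
    then show "0 \<le> coeff h i * ((real m - 2) * n ^ i + (real m - 2 * real i) * (-n) ^ i)"
      using c by simp
  qed
  finally show ?thesis .
qed

lemma denom_pos:
  fixes h :: "real poly"
  assumes "h \<in> Delta n a m" "m \<ge> 1" "n > 0"
  shows "poly h (-a) < poly h n"
proof -
  have deg: "degree h = m" and c: "\<forall>i. coeff h i \<ge> 0"
    and mn: "\<forall>t\<in>{-n..n}. poly h (-a) \<le> poly h t" using assms(1) by (auto simp: Delta_def)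
  have "poly h (-a) \<le> poly h 0" using mn assms(3) by auto
  also have "poly h 0 = coeff h 0" by (simp add: poly_0_coeff_0)
  also have "coeff h 0 < coeff h 0 + coeff h m * n ^ m"
  proof -
    have "coeff h m \<noteq> 0" using deg assms(2) by (metis leading_coeff_0_iff not_one_le_zero degree_0)
    then have "coeff h m > 0" using c by (metis order.not_eq_order_implies_strict)
    then show ?thesis using assms(3) by simp
  qed
  also have "\<dots> = (\<Sum>i\<in>{0,m}. coeff h i * n ^ i)" using assms(2) by simp
  also have "\<dots> \<le> (\<Sum>i\<le>m. coeff h i * n ^ i)"
    by (rule sum_mono2) (use c assms(3) in auto)
  also have "\<dots> = poly h n" using poly_sum_m[of h m n] deg by simp
  finally show ?thesis .
qed

lemma ratio_ge:
  fixes h :: "real poly"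
  assumes "poly h (-a) < poly h n" "r \<ge> 0"
    "r * (2 * poly h n - 2 * poly h (-a)) \<le> poly h n"
  shows "r \<le> ratio n a h"
  unfolding ratio_def using assms by (simp add: pos_le_divide_eq)

lemma pow_diff_bound:
  fixes s n :: real
  assumes "0 \<le> s" "s \<le> n"
  shows "n ^ Suc k - s ^ Suc k \<le> real (Suc k) * n ^ k * (n - s)"
proof (induction k)
  case 0 then show ?case by simp
next
  case (Suc k)
  have "n ^ Suc (Suc k) - s ^ Suc (Suc k) = n * (n ^ Suc k - s ^ Suc k) + s ^ Suc k * (n - s)"
    by (simp add: algebra_simps)
  also have "\<dots> \<le> n * (real (Suc k) * n ^ k * (n - s)) + n ^ Suc k * (n - s)"
  proof (rule add_mono)
    show "n * (n ^ Suc k - s ^ Suc k) \<le> n * (real (Suc k) * n ^ k * (n - s))"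
      using Suc assms by (intro mult_left_mono) auto
    show "s ^ Suc k * (n - s) \<le> n ^ Suc k * (n - s)"
      using assms by (intro mult_right_mono power_mono) auto
  qed
  also have "\<dots> = real (Suc (Suc k)) * n ^ Suc k * (n - s)" by (simp add: algebra_simps)
  finally show ?case .
qed

lemma hs_props:
  fixes n :: real and m :: nat
  assumes "n > 0" "even m" "m \<ge> 1"
  defines "hs \<equiv> monom 1 m + monom (real m * n ^ (m - 1)) 1"
  shows "hs \<in> Delta n n m \<and> ratio n n hs = (real m + 1) / (4 * real m)"
proof -
  obtain k where k: "m = Suc k" using assms(3) by (cases m) auto
  have ok: "odd k" using k assms(2) by simp
  have m2: "m \<ge> 2" using assms(2,3) by presburger
  have ph: "poly hs t = t ^ m + real m * n ^ k * t" for t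
    unfolding hs_def by (simp add: poly_monom k)
  have deg: "degree hs = m"
    unfolding hs_def using m2 by (subst degree_add_eq_left) (auto simp: degree_monom_eq intro: le_less_trans[OF degree_monom_le])
  have c: "\<forall>i. coeff hs i \<ge> 0" unfolding hs_def using assms(1) by (simp add: coeff_monom)
  have pn: "(-n) ^ m = n ^ m" using assms(2) by simp
  have pk: "(-n) ^ k = - (n ^ k)" using ok by simp
  have mn: "\<forall>t\<in>{-n..n}. poly hs (-n) \<le> poly hs t"
  proof
    fix t assume t: "t \<in> {-n..n}"
    show "poly hs (-n) \<le> poly hs t"
    proof (cases "t \<ge> 0")
      case True
      have "t ^ m \<ge> 0" "real m * n ^ k * t \<ge> 0" using True assms(1) by auto
      moreover have "poly hs (-n) = n ^ m - real m * n ^ m"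
        unfolding ph pn by (simp add: k algebra_simps)
      moreover have "real m * n ^ m \<ge> n ^ m" using assms(1,3) by simp
      ultimately show ?thesis unfolding ph by linarith
    next
      case False
      define s where "s = - t"
      have s: "0 \<le> s" "s \<le> n" using False t s_def by auto
      have tm: "t ^ m = s ^ m" using assms(2) s_def by simp
      have "n ^ m - s ^ m \<le> real m * n ^ k * (n - s)" using pow_diff_bound[OF s, of k] k by simp
      then show ?thesis unfolding ph pn tm s_def by (simp add: k algebra_simps)
    qed
  qed
  have dv: "poly (pderiv hs) (-n) = 0"
    unfolding hs_def by (simp add: pderiv_add pderiv_monom poly_monom k pk)
  have inD: "hs \<in> Delta n n m" unfolding Delta_def using deg c mn dv by auto
  have "poly hs n = (real m + 1) * n ^ m" unfolding ph by (simp add: k algebra_simps)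
  moreover have "poly hs (-n) = n ^ m - real m * n ^ m" unfolding ph pn by (simp add: k algebra_simps)
  ultimately have "ratio n n hs = (real m + 1) * n ^ m / (4 * real m * n ^ m)"
    unfolding ratio_def by (simp add: algebra_simps)
  also have "\<dots> = (real m + 1) / (4 * real m)" using assms(1) by simp
  finally show ?thesis using inD by simp
qed

lemma lower1:
  fixes h :: "real poly"
  assumes "n > 0" "m \<ge> 1" "a \<in> {0<..n}" "h \<in> Delta n a m"
  shows "(real m + 1) / (4 * real m) \<le> ratio n a h"
proof (rule ratio_ge)
  show lt: "poly h (-a) < poly h n" by (rule denom_pos[OF assms(4,2,1)])
  show "(real m + 1) / (4 * real m) \<ge> 0" by simp
  have "(real m - 1) * poly h n + (real m + 1) * poly h (-a) \<ge> 0"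
    using assms by (intro key1) (auto simp: Delta_def)
  then show "(real m + 1) / (4 * real m) * (2 * poly h n - 2 * poly h (-a)) \<le> poly h n"
    using assms(2) by (simp add: field_simps)
qed

theorem mainTheorem7:
  fixes n :: real and m :: nat
  assumes "n > 0" and "m \<ge> 1"
  shows "(even m \<longrightarrow>
            (let hs = monom 1 m + monom (real m * n ^ (m - 1)) 1 in
              hs \<in> Delta n n m
            \<and> ratio n n hs = (real m + 1) / (4 * real m)
            \<and> (\<forall>a\<in>{0<..n}. \<forall>h\<in>Delta n a m. ratio n n hs \<le> ratio n a h)
            \<and> (\<forall>h\<in>Delta n n m. ratio n n hs \<le> ratio n n h)))
       \<and> (odd m \<and> m \<ge> 2 \<longrightarrow>
            (\<exists>h0\<in>Delta n n (m - 1).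
                (\<forall>h\<in>Delta n n (m - 1). ratio n n h0 \<le> ratio n n h)
              \<and> (\<forall>h\<in>Delta n n m. ratio n n h0 \<le> ratio n n h)))"
proof (intro conjI impI)
  assume ev: "even m"
  show "let hs = monom 1 m + monom (real m * n ^ (m - 1)) 1 in
              hs \<in> Delta n n m
            \<and> ratio n n hs = (real m + 1) / (4 * real m)
            \<and> (\<forall>a\<in>{0<..n}. \<forall>h\<in>Delta n a m. ratio n n hs \<le> ratio n a h)
            \<and> (\<forall>h\<in>Delta n n m. ratio n n hs \<le> ratio n n h)"
    using hs_props[OF assms(1) ev assms(2)] lower1[OF assms(1,2)] assms(1)
    by (auto simp: Let_def)
next
  assume od: "odd m \<and> m \<ge> 2"
  define m' where "m' = m - 1"
  have m': "even m'" "m' \<ge> 1" "real m' = real m - 1" using od by (auto simp: m'_def)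
  define h0 where "h0 = monom 1 m' + monom (real m' * n ^ (m' - 1)) 1"
  have H: "h0 \<in> Delta n n m' \<and> ratio n n h0 = (real m' + 1) / (4 * real m')"
    using hs_props[OF assms(1) m'(1,2)] h0_def by simp
  show "\<exists>h0\<in>Delta n n (m - 1).
                (\<forall>h\<in>Delta n n (m - 1). ratio n n h0 \<le> ratio n n h)
              \<and> (\<forall>h\<in>Delta n n m. ratio n n h0 \<le> ratio n n h)"
  proof (intro bexI[of _ h0] conjI ballI)
    show "h0 \<in> Delta n n (m - 1)" using H m'_def by simp
    fix h assume "h \<in> Delta n n (m - 1)"
    then show "ratio n n h0 \<le> ratio n n h"
      using H lower1[OF assms(1) m'(2), of n h] assms(1) m'_def by simp
  next
    fix h assume hD: "h \<in> Delta n n m"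
    have "ratio n n h0 \<le> ratio n n h"
    proof -
      have r: "ratio n n h0 = real m / (4 * (real m - 1))" using H m' by simp
      show ?thesis unfolding r
      proof (rule ratio_ge)
        show "poly h (-n) < poly h n" by (rule denom_pos[OF hD assms(2,1)])
        show "real m / (4 * (real m - 1)) \<ge> 0" using od by simp
        have "(real m - 2) * poly h n + real m * poly h (-n) \<ge> 0"
          using hD od assms(1) by (intro key2) (auto simp: Delta_def)
        moreover have "real m - 1 > 0" using od by simp
        ultimately show "real m / (4 * (real m - 1)) * (2 * poly h n - 2 * poly h (-n)) \<le> poly h n"
          by (simp add: field_simps)
      qed
    qed
    then show "ratio n n h0 \<le> ratio n n h" .
  qed
qed

end
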